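(* Let $X$ be a finite set, $G\le S_X$, $f\in N_{S_X}(G)$ and $\Gamma=\Gamma_r(G,f)$. Let $\bar f$ be the permutation of the set of $G$-orbits induced by $f$ (mapping $wG$ to $(wf)G$). Then: (i) $\Gamma$ is an $|X/G|$-partite digraph with parts $\{C_G(G_x):x\in X/G\}$; (ii) for $x,z\in X/G$, there exists an edge from $C_G(G_z)$ to $C_G(G_x)$ if and only if $\bar f$ maps $zG$ to $xG$; (iii) the digraph on $X/G$ obtained from $\Gamma$ by collapsing every vertex set $C_G(G_x)$ into a single vertex is a disjoint union of directed cycles, namely the cycle decomposition of $\bar f$; (iv) every vertex of $\Gamma$ has indegree $1$ and outdegree $1$, so $\Gamma$ is a union of disjoint directed cycles.
   Context: Permutations act on the right ($xf$ is the image of $x$ under $f$; $fg$ means $f$ first, then $g$); $g^f=f^{-1}gf$. For $G\le S_X$, $xG$ is the orbit of $x$, $G_x$ its stabilizer, $X/G$ a fixed complete set of orbit representatives; $C_G(H)$ is the centralizer and $N_{S_X}(G)$ the normalizer. For every $y\in X$ fix $g_y\in G$ with $xg_y=y$, where $x$ is the representative in $X/G$ of the orbit of $y$. The digraph (possibly with loops) $\Gamma_r(G,f)$, for $f\in N_{S_X}(G)$, has vertex set the formally disjoint union of the sets $C_G(G_x)$, $x\in X/G$; for $x,z\in X/G$, $\kappa_x\in C_G(G_x)$ and $\lambda_z\in C_G(G_z)$, there is a directed edge $\lambda_z\to\kappa_x$ if and only if, with $y=xf^{-1}$, we have $z=yg_y^{-1}$ and $\kappa_x=((\lambda_z)^{g_y})^f$.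 *)

theory Defs
  imports "HOL-Combinatorics.Permutations"
begin

text \<open>Permutations act on the right: the image of x under g is written g x here;
  the product fg (f first, then g) is the function g \<circ> f.\<close>

definition perm_group :: "'a set \<Rightarrow> ('a \<Rightarrow> 'a) set \<Rightarrow> bool" where
  "perm_group X G \<longleftrightarrow> (\<forall>g\<in>G. g permutes X) \<and> id \<in> G \<and>
     (\<forall>g\<in>G. \<forall>h\<in>G. g \<circ> h \<in> G) \<and> (\<forall>g\<in>G. inv g \<in> G)"

text \<open>Right conjugation g^f = f^{-1} g f (apply f^{-1}, then g, then f).\<close>
definition conjp :: "('a \<Rightarrow> 'a) \<Rightarrow> ('a \<Rightarrow> 'a) \<Rightarrow> ('a \<Rightarrow> 'a)" where
  "conjp g f = f \<circ> g \<circ> inv f"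

definition normalizer :: "'a set \<Rightarrow> ('a \<Rightarrow> 'a) set \<Rightarrow> ('a \<Rightarrow> 'a) set" where
  "normalizer X G = {f. f permutes X \<and> (\<lambda>g. conjp g f) ` G = G}"

definition orbit :: "('a \<Rightarrow> 'a) set \<Rightarrow> 'a \<Rightarrow> 'a set" where
  "orbit G x = (\<lambda>g. g x) ` G"

definition orbits :: "'a set \<Rightarrow> ('a \<Rightarrow> 'a) set \<Rightarrow> 'a set set" where
  "orbits X G = orbit G ` X"

definition stab :: "('a \<Rightarrow> 'a) set \<Rightarrow> 'a \<Rightarrow> ('a \<Rightarrow> 'a) set" where
  "stab G x = {g\<in>G. g x = x}"

definition centralizer :: "('a \<Rightarrow> 'a) set \<Rightarrow> ('a \<Rightarrow> 'a) set \<Rightarrow> ('a \<Rightarrow> 'a) set" where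
  "centralizer G H = {g\<in>G. \<forall>h\<in>H. g \<circ> h = h \<circ> g}"

definition orbit_reps :: "'a set \<Rightarrow> ('a \<Rightarrow> 'a) set \<Rightarrow> 'a set \<Rightarrow> bool" where
  "orbit_reps X G R \<longleftrightarrow> R \<subseteq> X \<and> (\<forall>y\<in>X. \<exists>!x. x \<in> R \<and> orbit G x = orbit G y)"

definition rep :: "('a \<Rightarrow> 'a) set \<Rightarrow> 'a set \<Rightarrow> 'a \<Rightarrow> 'a" where
  "rep G R y = (THE x. x \<in> R \<and> orbit G x = orbit G y)"

definition transversal_choice :: "'a set \<Rightarrow> ('a \<Rightarrow> 'a) set \<Rightarrow> 'a set \<Rightarrow> ('a \<Rightarrow> ('a \<Rightarrow> 'a)) \<Rightarrow> bool" where
  "transversal_choice X G R gy \<longleftrightarrow> (\<forall>y\<in>X. gy y \<in> G \<and> gy y (rep G R y) = y)"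

text \<open>Vertices of Gamma_r(G,f): the disjoint union of the C_G(G_x), x in R, as tagged pairs.\<close>
definition gamma_V :: "('a \<Rightarrow> 'a) set \<Rightarrow> 'a set \<Rightarrow> ('a \<times> ('a \<Rightarrow> 'a)) set" where
  "gamma_V G R = Sigma R (\<lambda>x. centralizer G (stab G x))"

definition gamma_E :: "('a \<Rightarrow> 'a) set \<Rightarrow> 'a set \<Rightarrow> ('a \<Rightarrow> ('a \<Rightarrow> 'a)) \<Rightarrow> ('a \<Rightarrow> 'a)
    \<Rightarrow> ('a \<times> ('a \<Rightarrow> 'a)) \<Rightarrow> ('a \<times> ('a \<Rightarrow> 'a)) \<Rightarrow> bool" where
  "gamma_E G R gy f u v \<longleftrightarrow> u \<in> gamma_V G R \<and> v \<in> gamma_V G R \<and>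
     (let z = fst u; lam = snd u; x = fst v; kap = snd v; y = inv f x
      in z = inv (gy y) y \<and> kap = conjp (conjp lam (gy y)) f)"

end

theory Submission
  imports Defs
begin

lemma pg_perm: "perm_group X G \<Longrightarrow> g \<in> G \<Longrightarrow> g permutes X"
  by (simp add: perm_group_def)
lemma pg_bij: "perm_group X G \<Longrightarrow> g \<in> G \<Longrightarrow> bij g"
  using pg_perm permutes_bij by blast
lemma pg_comp: "perm_group X G \<Longrightarrow> g \<in> G \<Longrightarrow> h \<in> G \<Longrightarrow> g \<circ> h \<in> G"
  by (simp add: perm_group_def)
lemma pg_inv: "perm_group X G \<Longrightarrow> g \<in> G \<Longrightarrow> inv g \<in> G"
  by (simp add: perm_group_def)
lemma pg_id: "perm_group X G \<Longrightarrow> id \<in> G"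
  by (simp add: perm_group_def)

lemma orbit_eq_iff:
  assumes pg: "perm_group X G"
  shows "orbit G a = orbit G b \<longleftrightarrow> (\<exists>g\<in>G. g a = b)"
proof
  assume "orbit G a = orbit G b"
  moreover have "a \<in> orbit G a" unfolding orbit_def using pg_id[OF pg] by (metis id_apply image_eqI)
  ultimately obtain h where h: "h \<in> G" "h b = a" unfolding orbit_def by auto
  then have "inv h a = b" using pg_bij[OF pg h(1)] by (metis bij_inv_eq_iff)
  then show "\<exists>g\<in>G. g a = b" using pg_inv[OF pg h(1)] by blast
next
  assume "\<exists>g\<in>G. g a = b"
  then obtain g where g: "g \<in> G" "g a = b" by blast
  have "orbit G b \<subseteq> orbit G a"
  proof
    fix t assume "t \<in> orbit G b"
    then obtain h where "h \<in> G" "t = h b" unfolding orbit_def by auto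
    then have "t = (h \<circ> g) a" "h \<circ> g \<in> G" using g pg_comp[OF pg] by auto
    then show "t \<in> orbit G a" unfolding orbit_def by blast
  qed
  moreover have "orbit G a \<subseteq> orbit G b"
  proof
    fix t assume "t \<in> orbit G a"
    then obtain h where h: "h \<in> G" "t = h a" unfolding orbit_def by auto
    have "inv g b = a" using g pg_bij[OF pg g(1)] by (metis bij_inv_eq_iff)
    then have "t = (h \<circ> inv g) b" "h \<circ> inv g \<in> G" using h g pg_comp[OF pg] pg_inv[OF pg] by auto
    then show "t \<in> orbit G b" unfolding orbit_def by blast
  qed
  ultimately show "orbit G a = orbit G b" by blast
qed

lemma norm_facts:
  assumes "f \<in> normalizer X G"
  shows "f permutes X" "\<And>h. h \<in> G \<Longrightarrow> f \<circ> h \<circ> inv f \<in> G"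
    "\<And>h. h \<in> G \<Longrightarrow> inv f \<circ> h \<circ> f \<in> G"
proof -
  show fp: "f permutes X" using assms by (simp add: normalizer_def)
  have im: "(\<lambda>g. conjp g f) ` G = G" using assms by (simp add: normalizer_def)
  show "\<And>h. h \<in> G \<Longrightarrow> f \<circ> h \<circ> inv f \<in> G" using im unfolding conjp_def by blast
  fix h assume "h \<in> G"
  then obtain g where g: "g \<in> G" "h = f \<circ> g \<circ> inv f" using im unfolding conjp_def by force
  have b: "bij f" using fp permutes_bij by blast
  have "inv f \<circ> h \<circ> f = g" using g(2) b
    by (simp add: fun_eq_iff bij_is_inj inv_f_f)
  then show "inv f \<circ> h \<circ> f \<in> G" using g by simp
qed

lemma C_conj:
  assumes p: "bij p" and c1: "\<And>h. h \<in> G \<Longrightarrow> p \<circ> h \<circ> inv p \<in> G"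
    and c2: "\<And>h. h \<in> G \<Longrightarrow> inv p \<circ> h \<circ> p \<in> G"
    and lam: "lam \<in> centralizer G (stab G x)"
  shows "conjp lam p \<in> centralizer G (stab G (p x))"
proof -
  have lG: "lam \<in> G" using lam by (simp add: centralizer_def)
  have "\<forall>h\<in>stab G (p x). conjp lam p \<circ> h = h \<circ> conjp lam p"
  proof
    fix h assume "h \<in> stab G (p x)"
    then have h: "h \<in> G" "h (p x) = p x" by (auto simp: stab_def)
    have kin: "inv p \<circ> h \<circ> p \<in> stab G x" using c2[OF h(1)] h(2) p
      by (simp add: stab_def bij_is_inj inv_f_f)
    then have comm: "lam \<circ> (inv p \<circ> h \<circ> p) = (inv p \<circ> h \<circ> p) \<circ> lam"
      using lam by (simp add: centralizer_def)
    show "conjp lam p \<circ> h = h \<circ> conjp lam p"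
    proof
      fix t
      define s where "s = inv p t"
      have ts: "t = p s" using p by (simp add: s_def bij_is_surj surj_f_inv_f)
      have e: "lam (inv p (h (p s))) = inv p (h (p (lam s)))" using comm by (metis comp_apply)
      show "(conjp lam p \<circ> h) t = (h \<circ> conjp lam p) t"
        unfolding conjp_def ts using e p
        by (simp add: bij_is_inj bij_is_surj surj_f_inv_f inv_f_f)
    qed
  qed
  moreover have "conjp lam p \<in> G" using c1[OF lG] by (simp add: conjp_def)
  ultimately show ?thesis by (simp add: centralizer_def)
qed

lemma conjp_inj: "bij p \<Longrightarrow> conjp a p = conjp b p \<Longrightarrow> a = b"
proof
  fix s assume p: "bij p" and e: "conjp a p = conjp b p"
  have "p (a (inv p (p s))) = p (b (inv p (p s)))" using e by (metis comp_apply conjp_def)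
  then show "a s = b s" using p by (simp add: bij_is_inj inv_f_f inj_eq)
qed

theorem proposition5p1:
  fixes X :: "'a set" and G :: "('a \<Rightarrow> 'a) set" and f :: "'a \<Rightarrow> 'a"
    and R :: "'a set" and gy :: "'a \<Rightarrow> ('a \<Rightarrow> 'a)"
  assumes "finite X" and "perm_group X G" and "f \<in> normalizer X G"
    and "orbit_reps X G R" and "transversal_choice X G R gy"
  defines "V \<equiv> gamma_V G R" and "E \<equiv> gamma_E G R gy f"
  shows
    \<comment> \<open>(i) partition into card(X/G) parts C_G(G_x)\<close>
    "(V = (\<Union>x\<in>R. {x} \<times> centralizer G (stab G x)) \<and>
     (\<forall>x\<in>R. centralizer G (stab G x) \<noteq> {}) \<and>
     card R = card (orbits X G)) \<and>
    \<comment> \<open>(ii)\<close>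
    (\<forall>x\<in>R. \<forall>z\<in>R.
       (\<exists>lam kap. E (z, lam) (x, kap)) \<longleftrightarrow> orbit G (f z) = orbit G x) \<and>
    \<comment> \<open>(iii) collapsed digraph = functional graph of the induced permutation on X/G\<close>
    (\<exists>\<sigma>. \<sigma> permutes R \<and> (\<forall>z\<in>R. orbit G (f z) = orbit G (\<sigma> z)) \<and>
        (\<forall>x\<in>R. \<forall>z\<in>R. (\<exists>lam kap. E (z, lam) (x, kap)) \<longleftrightarrow> \<sigma> z = x)) \<and>
    \<comment> \<open>(iv)\<close>
    (\<forall>v\<in>V. card {u\<in>V. E u v} = 1 \<and> card {w\<in>V. E v w} = 1) \<and>
    (\<exists>\<pi>. \<pi> permutes V \<and> (\<forall>u\<in>V. \<forall>v\<in>V. E u v \<longleftrightarrow> \<pi> u = v))"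
proof -
  note pg = assms(2)
  have fp: "f permutes X" and fG1: "\<And>h. h \<in> G \<Longrightarrow> f \<circ> h \<circ> inv f \<in> G"
    and fG2: "\<And>h. h \<in> G \<Longrightarrow> inv f \<circ> h \<circ> f \<in> G" using norm_facts[OF assms(3)] by auto
  have fb: "bij f" using fp permutes_bij by blast
  have RX: "R \<subseteq> X" using assms(4) by (simp add: orbit_reps_def)
  have finR: "finite R" using RX assms(1) finite_subset by blast
  have ex1: "\<And>y. y \<in> X \<Longrightarrow> \<exists>!x. x \<in> R \<and> orbit G x = orbit G y"
    using assms(4) by (simp add: orbit_reps_def)
  have rep_in: "rep G R y \<in> R" and rep_orb: "orbit G (rep G R y) = orbit G y" if "y \<in> X" for y
    using theI'[OF ex1[OF that]] unfolding rep_def by auto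
  have rep_unique: "rep G R y = z" if "z \<in> R" "y \<in> X" "orbit G z = orbit G y" for y z
    unfolding rep_def using the1_equality[OF ex1[OF that(2)]] that by blast
  have gyG: "gy y \<in> G" and gyrep: "gy y (rep G R y) = y" if "y \<in> X" for y
    using assms(5) that by (auto simp: transversal_choice_def)
  have gyinv: "inv (gy y) y = rep G R y" if "y \<in> X" for y
    using gyrep[OF that] pg_bij[OF pg gyG[OF that]] by (metis bij_inv_eq_iff)
  have fX: "f a \<in> X" if "a \<in> X" for a using fp that by (simp add: permutes_in_image)
  have ifX: "inv f a \<in> X" if "a \<in> X" for a using permutes_inv[OF fp] that by (simp add: permutes_in_image)
  have ffi: "f (inv f a) = a" for a using fb by (simp add: bij_is_surj surj_f_inv_f)
  have L2: "orbit G (f a) = orbit G (f b) \<longleftrightarrow> orbit G a = orbit G b" for a b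
  proof
    assume "orbit G (f a) = orbit G (f b)"
    then obtain g where g: "g \<in> G" "g (f a) = f b" using orbit_eq_iff[OF pg] by blast
    have "(inv f \<circ> g \<circ> f) a = b" using g fb by (simp add: bij_is_inj inv_f_f)
    then show "orbit G a = orbit G b" using fG2[OF g(1)] orbit_eq_iff[OF pg] by blast
  next
    assume "orbit G a = orbit G b"
    then obtain g where g: "g \<in> G" "g a = b" using orbit_eq_iff[OF pg] by blast
    have "(f \<circ> g \<circ> inv f) (f a) = f b" using g fb by (simp add: bij_is_inj inv_f_f)
    then show "orbit G (f a) = orbit G (f b)" using fG1[OF g(1)] orbit_eq_iff[OF pg] by blast
  qed
  define \<sigma> where "\<sigma> = (\<lambda>z. if z \<in> R then rep G R (f z) else z)"
  have \<sigma>R: "\<sigma> z \<in> R" if "z \<in> R" for z using that RX fX rep_in by (auto simp: \<sigma>_def)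
  have \<sigma>orb: "orbit G (f z) = orbit G (\<sigma> z)" if "z \<in> R" for z
    using that RX fX rep_orb by (auto simp: \<sigma>_def)
  have key: "rep G R (inv f x) = z \<longleftrightarrow> \<sigma> z = x" if "x \<in> R" "z \<in> R" for x z
  proof -
    have xX: "x \<in> X" "z \<in> X" using that RX by auto
    have "rep G R (inv f x) = z \<longleftrightarrow> orbit G z = orbit G (inv f x)"
      using rep_unique[OF that(2) ifX[OF xX(1)]] rep_orb[OF ifX[OF xX(1)]] by metis
    also have "\<dots> \<longleftrightarrow> orbit G (f z) = orbit G x" using L2[of z "inv f x"] ffi by simp
    also have "\<dots> \<longleftrightarrow> rep G R (f z) = x"
      using rep_unique[OF that(1) fX[OF xX(2)]] rep_orb[OF fX[OF xX(2)]] by metis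
    finally show ?thesis using that by (simp add: \<sigma>_def)
  qed
  have \<sigma>inj: "inj_on \<sigma> R"
  proof
    fix a b assume ab: "a \<in> R" "b \<in> R" "\<sigma> a = \<sigma> b"
    then have "orbit G (f a) = orbit G (f b)" using \<sigma>orb by metis
    then have "orbit G a = orbit G b" using L2 by blast
    then show "a = b" using rep_unique[OF ab(1), of b] rep_unique[OF ab(2), of b] ab RX by auto
  qed
  have \<sigma>perm: "\<sigma> permutes R"
  proof (rule bij_imp_permutes)
    have "\<sigma> ` R = R" using endo_inj_surj[OF finR _ \<sigma>inj] \<sigma>R by blast
    then show "bij_betw \<sigma> R R" using \<sigma>inj by (simp add: bij_betw_def)
    show "\<And>x. x \<notin> R \<Longrightarrow> \<sigma> x = x" by (simp add: \<sigma>_def)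
  qed
  define \<pi> where "\<pi> = (\<lambda>u. if u \<in> V then (\<sigma> (fst u), conjp (conjp (snd u) (gy (inv f (\<sigma> (fst u))))) f) else u)"
  have Vmem: "(z, lam) \<in> V \<longleftrightarrow> z \<in> R \<and> lam \<in> centralizer G (stab G z)" for z lam
    by (simp add: V_def gamma_V_def)
  have Epi: "E u v \<longleftrightarrow> \<pi> u = v" if "u \<in> V" "v \<in> V" for u v
  proof -
    obtain z lam x kap where uv: "u = (z, lam)" "v = (x, kap)" by (cases u, cases v) auto
    have zx: "z \<in> R" "x \<in> R" using that uv Vmem by auto
    have "E u v \<longleftrightarrow> z = inv (gy (inv f x)) (inv f x) \<and> kap = conjp (conjp lam (gy (inv f x))) f"
      using that uv by (simp add: E_def gamma_E_def Let_def V_def)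
    also have "\<dots> \<longleftrightarrow> \<sigma> z = x \<and> kap = conjp (conjp lam (gy (inv f x))) f"
      using gyinv[OF ifX] key[OF zx(2) zx(1)] zx RX by auto
    also have "\<dots> \<longleftrightarrow> \<pi> u = v" using that uv by (auto simp: \<pi>_def)
    finally show ?thesis .
  qed
  have piV: "\<pi> u \<in> V" if "u \<in> V" for u
  proof -
    obtain z lam where u: "u = (z, lam)" by (cases u) auto
    have z: "z \<in> R" and lam: "lam \<in> centralizer G (stab G z)" using that u Vmem by auto
    define x where "x = \<sigma> z"
    define y where "y = inv f x"
    have xR: "x \<in> R" using \<sigma>R z x_def by simp
    have yX: "y \<in> X" using xR RX ifX y_def by auto
    have ry: "rep G R y = z" using key[OF xR z] x_def y_def by simp
    have gz: "gy y z = y" using gyrep[OF yX] ry by simp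
    have gG: "gy y \<in> G" using gyG[OF yX] .
    have gb: "bij (gy y)" using pg_bij[OF pg gG] .
    have "conjp lam (gy y) \<in> centralizer G (stab G (gy y z))"
    proof (rule C_conj[OF gb _ _ lam])
      show "\<And>h. h \<in> G \<Longrightarrow> gy y \<circ> h \<circ> inv (gy y) \<in> G"
        using pg_comp[OF pg] pg_inv[OF pg] gG by simp
      show "\<And>h. h \<in> G \<Longrightarrow> inv (gy y) \<circ> h \<circ> gy y \<in> G"
        using pg_comp[OF pg] pg_inv[OF pg] gG by simp
    qed
    then have c1: "conjp lam (gy y) \<in> centralizer G (stab G y)" using gz by simp
    have "conjp (conjp lam (gy y)) f \<in> centralizer G (stab G (f y))"
      by (rule C_conj[OF fb fG1 fG2 c1])
    then have "conjp (conjp lam (gy y)) f \<in> centralizer G (stab G x)" using ffi y_def by simp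
    then show ?thesis using that u xR by (simp add: \<pi>_def Vmem x_def y_def)
  qed
  have piinj: "inj_on \<pi> V"
  proof
    fix a b assume ab: "a \<in> V" "b \<in> V" "\<pi> a = \<pi> b"
    obtain z1 l1 z2 l2 where e: "a = (z1, l1)" "b = (z2, l2)" by (cases a, cases b) auto
    have zR: "z1 \<in> R" "z2 \<in> R" using ab e Vmem by auto
    have s: "\<sigma> z1 = \<sigma> z2" using ab e by (simp add: \<pi>_def)
    then have z: "z1 = z2" using \<sigma>inj zR by (meson inj_onD)
    define g where "g = gy (inv f (\<sigma> z1))"
    have gX: "inv f (\<sigma> z1) \<in> X" using \<sigma>R[OF zR(1)] RX ifX by auto
    have gb: "bij g" using pg_bij[OF pg gyG[OF gX]] g_def by simp
    have "conjp (conjp l1 g) f = conjp (conjp l2 g) f" using ab e z by (simp add: \<pi>_def g_def)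
    then have "l1 = l2" using conjp_inj[OF fb] conjp_inj[OF gb] by blast
    then show "a = b" using e z by simp
  qed
  have finV: "finite V"
  proof -
    have "V \<subseteq> R \<times> {p. p permutes X}" using pg_perm[OF pg]
      by (auto simp: V_def gamma_V_def centralizer_def)
    then show ?thesis using finR finite_permutations[OF assms(1)] finite_subset by blast
  qed
  have piim: "\<pi> ` V = V" using endo_inj_surj[OF finV _ piinj] piV by blast
  have piperm: "\<pi> permutes V"
  proof (rule bij_imp_permutes)
    show "bij_betw \<pi> V V" using piinj piim by (simp add: bij_betw_def)
    show "\<And>x. x \<notin> V \<Longrightarrow> \<pi> x = x" by (simp add: \<pi>_def)
  qed
  have idC: "id \<in> centralizer G (stab G z)" for z using pg_id[OF pg] by (simp add: centralizer_def)
  have edge: "(\<exists>lam kap. E (z, lam) (x, kap)) \<longleftrightarrow> \<sigma> z = x" if "x \<in> R" "z \<in> R" for x z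
  proof
    assume "\<exists>lam kap. E (z, lam) (x, kap)"
    then obtain lam kap where e: "E (z, lam) (x, kap)" by blast
    then have "(z, lam) \<in> V" "(x, kap) \<in> V" by (auto simp: E_def gamma_E_def V_def)
    then have "\<pi> (z, lam) = (x, kap)" using Epi e by blast
    then show "\<sigma> z = x" using \<open>(z, lam) \<in> V\<close> by (simp add: \<pi>_def)
  next
    assume s: "\<sigma> z = x"
    have zV: "(z, id) \<in> V" using Vmem idC that by simp
    have pV: "\<pi> (z, id) \<in> V" using piV[OF zV] .
    have "\<pi> (z, id) = (x, snd (\<pi> (z, id)))" using zV s by (simp add: \<pi>_def)
    then have "E (z, id) (x, snd (\<pi> (z, id)))" using Epi[OF zV] pV by metis
    then show "\<exists>lam kap. E (z, lam) (x, kap)" by blast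
  qed
  have part1: "V = (\<Union>x\<in>R. {x} \<times> centralizer G (stab G x))"
    by (auto simp: V_def gamma_V_def)
  have part2: "card R = card (orbits X G)"
  proof -
    have "bij_betw (orbit G) R (orbits X G)"
    proof (rule bij_betw_imageI)
      show "inj_on (orbit G) R"
      proof
        fix a b assume "a \<in> R" "b \<in> R" "orbit G a = orbit G b"
        then show "a = b" using rep_unique[of a b] rep_unique[of b b] RX by auto
      qed
      show "orbit G ` R = orbits X G"
      proof
        show "orbit G ` R \<subseteq> orbits X G" using RX by (auto simp: orbits_def)
        show "orbits X G \<subseteq> orbit G ` R"
          unfolding orbits_def using rep_in rep_orb by (metis image_subset_iff imageI)
      qed
    qed
    then show ?thesis by (rule bij_betw_same_card)
  qed
  have ii: "(\<exists>lam kap. E (z, lam) (x, kap)) \<longleftrightarrow> orbit G (f z) = orbit G x" if "x \<in> R" "z \<in> R" for x z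
  proof -
    have "orbit G (f z) = orbit G x \<longleftrightarrow> \<sigma> z = x"
      using \<sigma>orb[OF that(2)] \<sigma>R[OF that(2)] rep_unique[OF \<sigma>R[OF that(2)], of x]
        rep_unique[OF that(1), of x] that RX by auto
    then show ?thesis using edge[OF that] by simp
  qed
  have deg: "card {u\<in>V. E u v} = 1 \<and> card {w\<in>V. E v w} = 1" if "v \<in> V" for v
  proof -
    have "v \<in> \<pi> ` V" using piim that by simp
    then obtain u where u: "u \<in> V" "\<pi> u = v" by (metis imageE)
    have "{u\<in>V. E u v} = {u}"
    proof (intro equalityI subsetI)
      fix w assume "w \<in> {u\<in>V. E u v}"
      then have w: "w \<in> V" "E w v" by simp_all
      then have w: "w \<in> V" "\<pi> w = v" using Epi[OF w(1) that] by simp_all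
      then show "w \<in> {u}" using u piinj by (metis inj_onD singletonI)
    next
      fix w assume "w \<in> {u}"
      then have "w = u" by simp
      then show "w \<in> {u\<in>V. E u v}" using u that Epi[OF u(1) that] by simp
    qed
    moreover have "{w\<in>V. E v w} = {\<pi> v}"
    proof (intro equalityI subsetI)
      fix w assume "w \<in> {w\<in>V. E v w}"
      then have "w \<in> V" "E v w" by simp_all
      then show "w \<in> {\<pi> v}" using Epi[OF that \<open>w \<in> V\<close>] by simp
    next
      fix w assume "w \<in> {\<pi> v}"
      then have "w = \<pi> v" by simp
      then show "w \<in> {w\<in>V. E v w}" using piV[OF that] Epi[OF that piV[OF that]] by simp
    qed
    ultimately show ?thesis by simp
  qed
  have A: "\<forall>x\<in>R. centralizer G (stab G x) \<noteq> {}" using idC by blast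
  have B: "\<exists>\<sigma>. \<sigma> permutes R \<and> (\<forall>z\<in>R. orbit G (f z) = orbit G (\<sigma> z)) \<and>
        (\<forall>x\<in>R. \<forall>z\<in>R. (\<exists>lam kap. E (z, lam) (x, kap)) \<longleftrightarrow> \<sigma> z = x)"
    using \<sigma>perm \<sigma>orb edge by blast
  have C: "\<exists>\<pi>. \<pi> permutes V \<and> (\<forall>u\<in>V. \<forall>v\<in>V. E u v \<longleftrightarrow> \<pi> u = v)"
    using piperm Epi by blast
  show ?thesis
    using part1 part2 A ii B deg C by simp
qed

end
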